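(* Let $G$ be a complete edge-colored permutation graph. Then for each strong module $M$ of $G$, the quotient graph $G[M]/\mathbb{P}_{\max}(M)$ is a complete edge-colored permutation graph.
   Context: A complete $k$-edge-colored graph $G=(V,E_1,\dots,E_k)$ is the complete graph on a finite set $V$ whose edges are partitioned into $k$ nonempty color classes $E_i$ (the one-vertex graph also counts); $G_{|i}=(V,E_i)$. A labeling is a bijection $\ell:V\to\{1,\dots,|V|\}$. A graph $(V,E)$ with labeling $\ell$ is a simple permutation graph of a permutation $\pi$ if for all $u,v$ with $\ell(u)>\ell(v)$: $\{u,v\}\in E$ iff $\pi^{-1}(\ell(u))<\pi^{-1}(\ell(v))$. $G$ is a complete edge-colored permutation graph if there exist a labeling $\ell$ and permutations $\pi_1,\dots,\pi_k$ with $(G_{|i},\ell)$ a simple permutation graph of $\pi_i$ for all $i$. A module is a set $M\subseteq V$ such that for every $v\notin M$ all edges $\{u,v\}$, $u\in M$, have the same color; a strong module is a nonempty module not overlapping (i.e., comparable by inclusion or disjoint with) any other module. For a strong module $M$ with $|M|\ge2$, $\mathbb{P}_{\max}(M)$ is the set of inclusion-maximal strong modules properly contained in $M$ (a partition of $M$), and $G[M]/\mathbb{P}_{\max}(M)$ is the complete graph on $\mathbb{P}_{\max}(M)$ where $\{M_a,M_b\}$ has the common color of all edges between $M_a$ and $M_b$; for $|M|=1$ the quotient is the one-vertex graph. *)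

theory Defs
  imports Main
begin

text \<open>The colour classes
  E_i are the (nonempty) fibres of col over the colours actually used, so k is the
  number of used colours; the one-vertex graph (k = 0) is included.\<close>

definition complete_ec_graph :: "'a set \<Rightarrow> ('a \<Rightarrow> 'a \<Rightarrow> 'c) \<Rightarrow> bool" where
  "complete_ec_graph V col \<longleftrightarrow> finite V \<and> V \<noteq> {} \<and>
     (\<forall>u\<in>V. \<forall>v\<in>V. u \<noteq> v \<longrightarrow> col u v = col v u)"

definition used_colors :: "'a set \<Rightarrow> ('a \<Rightarrow> 'a \<Rightarrow> 'c) \<Rightarrow> 'c set" where
  "used_colors V col = {col u v | u v. u \<in> V \<and> v \<in> V \<and> u \<noteq> v}"

definition labeling :: "'a set \<Rightarrow> ('a \<Rightarrow> nat) \<Rightarrow> bool" where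
  "labeling V lab \<longleftrightarrow> bij_betw lab V {1..card V}"

definition simple_perm_graph ::
    "'a set \<Rightarrow> ('a \<Rightarrow> 'a \<Rightarrow> bool) \<Rightarrow> ('a \<Rightarrow> nat) \<Rightarrow> (nat \<Rightarrow> nat) \<Rightarrow> bool" where
  "simple_perm_graph V E lab \<pi> \<longleftrightarrow> bij_betw \<pi> {1..card V} {1..card V} \<and>
     (\<forall>u\<in>V. \<forall>v\<in>V. lab u > lab v \<longrightarrow>
        (E u v \<longleftrightarrow> inv_into {1..card V} \<pi> (lab u) < inv_into {1..card V} \<pi> (lab v)))"

definition complete_ec_perm_graph :: "'a set \<Rightarrow> ('a \<Rightarrow> 'a \<Rightarrow> 'c) \<Rightarrow> bool" where
  "complete_ec_perm_graph V col \<longleftrightarrow> complete_ec_graph V col \<and>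
     (\<exists>lab. labeling V lab \<and>
        (\<forall>i\<in>used_colors V col. \<exists>\<pi>. simple_perm_graph V (\<lambda>u v. col u v = i) lab \<pi>))"

definition is_module :: "'a set \<Rightarrow> ('a \<Rightarrow> 'a \<Rightarrow> 'c) \<Rightarrow> 'a set \<Rightarrow> bool" where
  "is_module V col M \<longleftrightarrow> M \<subseteq> V \<and>
     (\<forall>v\<in>V - M. \<forall>u\<in>M. \<forall>u'\<in>M. col u v = col u' v)"

definition strong_module :: "'a set \<Rightarrow> ('a \<Rightarrow> 'a \<Rightarrow> 'c) \<Rightarrow> 'a set \<Rightarrow> bool" where
  "strong_module V col M \<longleftrightarrow> is_module V col M \<and> M \<noteq> {} \<and>
     (\<forall>M'. is_module V col M' \<longrightarrow> M \<subseteq> M' \<or> M' \<subseteq> M \<or> M \<inter> M' = {})"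

definition Pmax :: "'a set \<Rightarrow> ('a \<Rightarrow> 'a \<Rightarrow> 'c) \<Rightarrow> 'a set \<Rightarrow> 'a set set" where
  "Pmax V col M = {M'. strong_module V col M' \<and> M' \<subset> M \<and>
     (\<forall>M''. strong_module V col M'' \<and> M'' \<subset> M \<longrightarrow> \<not> M' \<subset> M'')}"

definition quotient_vertices :: "'a set \<Rightarrow> ('a \<Rightarrow> 'a \<Rightarrow> 'c) \<Rightarrow> 'a set \<Rightarrow> 'a set set" where
  "quotient_vertices V col M = (if card M \<ge> 2 then Pmax V col M else {M})"

text \<open>Colour of {Ma, Mb} in the quotient: the (common) colour of the edges between Ma and Mb.\<close>
definition quotient_col :: "('a \<Rightarrow> 'a \<Rightarrow> 'c) \<Rightarrow> 'a set \<Rightarrow> 'a set \<Rightarrow> 'c" where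
  "quotient_col col A B = col (SOME a. a \<in> A) (SOME b. b \<in> B)"

end

theory Submission
  imports Defs
begin

definition rk :: "'b set \<Rightarrow> ('b \<Rightarrow> nat) \<Rightarrow> 'b \<Rightarrow> nat" where
  "rk S f x = card {y\<in>S. f y \<le> f x}"

lemma rk_mono:
  assumes "finite S" "x \<in> S" "y \<in> S" "f x < f y"
  shows "rk S f x < rk S f y"
proof -
  have "y \<in> {z\<in>S. f z \<le> f y}" "y \<notin> {z\<in>S. f z \<le> f x}" using assms by auto
  moreover have "{z\<in>S. f z \<le> f x} \<subseteq> {z\<in>S. f z \<le> f y}" using assms by auto
  ultimately have "{z\<in>S. f z \<le> f x} \<subset> {z\<in>S. f z \<le> f y}" by blast
  moreover have "finite {z\<in>S. f z \<le> f y}" using assms(1) by simp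
  ultimately show ?thesis unfolding rk_def by (rule psubset_card_mono[rotated])
qed

lemma rk_iff:
  assumes "finite S" "inj_on f S" "x \<in> S" "y \<in> S"
  shows "rk S f x < rk S f y \<longleftrightarrow> f x < f y"
proof
  assume h: "rk S f x < rk S f y"
  show "f x < f y"
  proof (rule ccontr)
    assume "\<not> f x < f y"
    then have "f y < f x \<or> f y = f x" by auto
    then show False
    proof
      assume "f y < f x" then show False using rk_mono[of S y x f] assms h by auto
    next
      assume "f y = f x" then have "x = y" using assms inj_on_def by metis
      then show False using h by simp
    qed
  qed
next
  assume "f x < f y"
  then show "rk S f x < rk S f y" by (rule rk_mono[OF assms(1,3,4)])
qed

lemma rk_bij:
  assumes "finite S" "inj_on f S"
  shows "bij_betw (rk S f) S {1..card S}"
proof -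
  have inj: "inj_on (rk S f) S"
  proof (rule inj_onI)
    fix x y assume xy: "x \<in> S" "y \<in> S" "rk S f x = rk S f y"
    then have "\<not> f x < f y" "\<not> f y < f x" using rk_iff[OF assms] by (metis less_irrefl)+
    then have "f x = f y" by simp
    then show "x = y" using xy assms(2) inj_on_def by metis
  qed
  have sub: "rk S f ` S \<subseteq> {1..card S}"
  proof
    fix k assume "k \<in> rk S f ` S"
    then obtain x where x: "x \<in> S" "k = rk S f x" by auto
    have "x \<in> {y\<in>S. f y \<le> f x}" using x by auto
    then have "0 < card {y\<in>S. f y \<le> f x}" using assms(1) by (subst card_gt_0_iff) auto
    then have "1 \<le> k" unfolding x rk_def by simp
    moreover have "k \<le> card S" unfolding x rk_def using assms(1) by (intro card_mono) auto
    ultimately show "k \<in> {1..card S}" by simp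
  qed
  have "card (rk S f ` S) = card {1..card S}" using card_image[OF inj] by simp
  then have "rk S f ` S = {1..card S}" using sub by (intro card_subset_eq) auto
  then show ?thesis using inj bij_betw_def by blast
qed

lemma char1:
  assumes "labeling V lab" "simple_perm_graph V E lab \<pi>"
  shows "\<exists>pos. bij_betw pos V {1..card V} \<and>
     (\<forall>u\<in>V. \<forall>v\<in>V. lab u > lab v \<longrightarrow> (E u v \<longleftrightarrow> pos u < pos v))"
proof -
  have b1: "bij_betw lab V {1..card V}" using assms(1) labeling_def by blast
  have b2: "bij_betw \<pi> {1..card V} {1..card V}" using assms(2) simple_perm_graph_def by blast
  have b3: "bij_betw (inv_into {1..card V} \<pi>) {1..card V} {1..card V}"
    using bij_betw_inv_into[OF b2] .
  have c: "\<forall>u\<in>V. \<forall>v\<in>V. lab u > lab v \<longrightarrow>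
        (E u v \<longleftrightarrow> inv_into {1..card V} \<pi> (lab u) < inv_into {1..card V} \<pi> (lab v))"
    using assms(2) unfolding simple_perm_graph_def by blast
  have "bij_betw (inv_into {1..card V} \<pi> \<circ> lab) V {1..card V}" by (rule bij_betw_trans[OF b1 b3])
  moreover have "\<forall>u\<in>V. \<forall>v\<in>V. lab u > lab v \<longrightarrow> (E u v \<longleftrightarrow> (inv_into {1..card V} \<pi> \<circ> lab) u < (inv_into {1..card V} \<pi> \<circ> lab) v)"
    using c by simp
  ultimately show ?thesis by blast
qed

lemma char2:
  assumes "labeling V lab" "bij_betw pos V {1..card V}"
    "\<forall>u\<in>V. \<forall>v\<in>V. lab u > lab v \<longrightarrow> (E u v \<longleftrightarrow> pos u < pos v)"
  shows "\<exists>\<pi>. simple_perm_graph V E lab \<pi>"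
proof -
  have b1: "bij_betw lab V {1..card V}" using assms(1) labeling_def by blast
  define \<pi> where "\<pi> = lab \<circ> inv_into V pos"
  have bp: "bij_betw \<pi> {1..card V} {1..card V}"
    unfolding \<pi>_def using bij_betw_trans[OF bij_betw_inv_into[OF assms(2)] b1] .
  have key: "inv_into {1..card V} \<pi> (lab u) = pos u" if "u \<in> V" for u
  proof -
    have "\<pi> (pos u) = lab u" unfolding \<pi>_def using that assms(2)
      by (simp add: bij_betw_def)
    moreover have "pos u \<in> {1..card V}" using that assms(2) bij_betwE by blast
    ultimately show ?thesis using bp bij_betw_def inv_into_f_f by metis
  qed
  show ?thesis
    apply (rule exI[of _ \<pi>])
    unfolding simple_perm_graph_def using bp key assms(3) by simp
qed

lemma hered:
  assumes G: "complete_ec_perm_graph V col" and fin: "finite P" and ne: "P \<noteq> {}"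
    and inj: "inj_on r P" and sub: "r ` P \<subseteq> V"
  shows "complete_ec_perm_graph P (\<lambda>A B. col (r A) (r B))"
proof -
  have cg: "complete_ec_graph V col" using G unfolding complete_ec_perm_graph_def by (rule conjunct1)
  have cg': "complete_ec_graph P (\<lambda>A B. col (r A) (r B))"
    unfolding complete_ec_graph_def
  proof (intro conjI fin ne ballI impI)
    fix A B assume "A \<in> P" "B \<in> P" "A \<noteq> B"
    then have "r A \<noteq> r B" "r A \<in> V" "r B \<in> V" using inj sub by (auto simp: inj_on_eq_iff)
    moreover have "\<forall>u\<in>V. \<forall>v\<in>V. u \<noteq> v \<longrightarrow> col u v = col v u"
      using cg unfolding complete_ec_graph_def by blast
    ultimately show "col (r A) (r B) = col (r B) (r A)" by blast
  qed
  obtain lab where lab: "labeling V lab" and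
    perm: "\<forall>i\<in>used_colors V col. \<exists>\<pi>. simple_perm_graph V (\<lambda>u v. col u v = i) lab \<pi>"
    using G unfolding complete_ec_perm_graph_def by (elim conjE exE) blast
  have labb: "bij_betw lab V {1..card V}" using lab unfolding labeling_def .
  have injl: "inj_on (lab \<circ> r) P"
    using comp_inj_on[OF inj] inj_on_subset[OF _ sub] labb unfolding bij_betw_def by blast
  define lab' where "lab' = rk P (lab \<circ> r)"
  have lab': "labeling P lab'" unfolding labeling_def lab'_def using rk_bij[OF fin injl] .
  have lab'iff: "lab' A > lab' B \<longleftrightarrow> lab (r A) > lab (r B)" if "A \<in> P" "B \<in> P" for A B
    unfolding lab'_def using rk_iff[OF fin injl that(2) that(1)] by simp
  have H: "\<exists>\<pi>. simple_perm_graph P (\<lambda>A B. col (r A) (r B) = i) lab' \<pi>"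
    if i: "i \<in> used_colors P (\<lambda>A B. col (r A) (r B))" for i
  proof -
    obtain A B where AB: "A \<in> P" "B \<in> P" "A \<noteq> B" "i = col (r A) (r B)"
      using i unfolding used_colors_def by blast
    then have "r A \<noteq> r B" "r A \<in> V" "r B \<in> V" using inj sub by (auto simp: inj_on_eq_iff)
    then have "i \<in> used_colors V col" using AB(4) unfolding used_colors_def by blast
    then obtain \<pi> where "simple_perm_graph V (\<lambda>u v. col u v = i) lab \<pi>" using perm by blast
    then obtain pos where pos: "bij_betw pos V {1..card V}"
      and posc: "\<forall>u\<in>V. \<forall>v\<in>V. lab u > lab v \<longrightarrow> (col u v = i \<longleftrightarrow> pos u < pos v)"
      using char1[OF lab] by blast
    have injp: "inj_on (pos \<circ> r) P"
      using comp_inj_on[OF inj] inj_on_subset[OF _ sub] pos unfolding bij_betw_def by blast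
    define pos' where "pos' = rk P (pos \<circ> r)"
    have pos': "bij_betw pos' P {1..card P}" unfolding pos'_def using rk_bij[OF fin injp] .
    have pos'iff: "pos' A < pos' B \<longleftrightarrow> pos (r A) < pos (r B)" if "A \<in> P" "B \<in> P" for A B
      unfolding pos'_def using rk_iff[OF fin injp that] by simp
    have "\<forall>A\<in>P. \<forall>B\<in>P. lab' A > lab' B \<longrightarrow> (col (r A) (r B) = i \<longleftrightarrow> pos' A < pos' B)"
    proof (intro ballI impI)
      fix A B assume h: "A \<in> P" "B \<in> P" "lab' A > lab' B"
      then have "lab (r A) > lab (r B)" using lab'iff by blast
      moreover have "r A \<in> V" "r B \<in> V" using h sub by auto
      ultimately have "col (r A) (r B) = i \<longleftrightarrow> pos (r A) < pos (r B)"
        using posc by blast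
      then show "col (r A) (r B) = i \<longleftrightarrow> pos' A < pos' B"
        using pos'iff[OF h(1,2)] by simp
    qed
    then show ?thesis by (rule char2[OF lab' pos'])
  qed
  show ?thesis unfolding complete_ec_perm_graph_def
    apply (intro conjI exI[of _ lab'] cg' lab' ballI)
    by (rule H)
qed

lemma singleton_strong:
  assumes "v \<in> V"
  shows "strong_module V col {v}"
  unfolding strong_module_def is_module_def using assms by auto

theorem proposition4p4:
  fixes V :: "'a set" and col :: "'a \<Rightarrow> 'a \<Rightarrow> 'c" and M :: "'a set"
  assumes "complete_ec_perm_graph V col"
    and "strong_module V col M"
  shows "complete_ec_perm_graph (quotient_vertices V col M) (quotient_col col)"
proof -
  define r :: "'a set \<Rightarrow> 'a" where "r = (\<lambda>A. SOME a. a \<in> A)"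
  have qc: "quotient_col col = (\<lambda>A B. col (r A) (r B))"
    unfolding quotient_col_def r_def by (intro ext) simp
  have finV: "finite V" using assms(1) unfolding complete_ec_perm_graph_def complete_ec_graph_def by blast
  have MV: "M \<subseteq> V" "M \<noteq> {}" using assms(2) unfolding strong_module_def is_module_def by auto
  define Q where "Q = quotient_vertices V col M"
  have props: "finite Q \<and> Q \<noteq> {} \<and> (\<forall>A\<in>Q. A \<noteq> {} \<and> A \<subseteq> V) \<and>
      (\<forall>A\<in>Q. \<forall>B\<in>Q. A \<noteq> B \<longrightarrow> A \<inter> B = {})"
  proof (cases "card M \<ge> 2")
    case False
    then show ?thesis using MV unfolding Q_def quotient_vertices_def by auto
  next
    case True
    have Qe: "Q = Pmax V col M" using True unfolding Q_def quotient_vertices_def by simp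
    have el0: "strong_module V col A \<and> A \<subset> M \<and>
       (\<forall>M''. strong_module V col M'' \<and> M'' \<subset> M \<longrightarrow> \<not> A \<subset> M'')" if "A \<in> Q" for A
      using that unfolding Qe Pmax_def by simp
    have el: "A \<noteq> {} \<and> A \<subseteq> V \<and> strong_module V col A \<and> A \<subset> M" if "A \<in> Q" for A
    proof -
      have "strong_module V col A" "A \<subset> M" using el0[OF that] by auto
      then show ?thesis using MV unfolding strong_module_def by blast
    qed
    have finQ: "finite Q" by (rule finite_subset[of Q "Pow V"]) (use finV el in auto)
    define S where "S = {A. strong_module V col A \<and> A \<subset> M}"
    have finS: "finite S" unfolding S_def by (rule finite_subset[of _ "Pow V"]) (use finV MV in auto)
    obtain v where v: "v \<in> M" using MV by auto
    have "M \<noteq> {v}"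
    proof
      assume "M = {v}" then show False using True by simp
    qed
    have "v \<in> V" using v MV by blast
    then have "strong_module V col {v}" by (rule singleton_strong)
    moreover have "{v} \<subset> M" using v \<open>M \<noteq> {v}\<close> by blast
    ultimately have vS: "{v} \<in> S" unfolding S_def by simp
    then have "S \<noteq> {}" by blast
    from finite_has_maximal[OF finS this]
    obtain m where m: "m \<in> S" "\<forall>b\<in>S. m \<le> b \<longrightarrow> m = b" by (elim bexE) simp
    have "m \<in> Q" unfolding Qe Pmax_def
    proof (intro CollectI conjI allI impI)
      show "strong_module V col m" "m \<subset> M" using m(1) unfolding S_def by auto
      fix M'' assume "strong_module V col M'' \<and> M'' \<subset> M"
      then have "M'' \<in> S" unfolding S_def by simp
      then show "\<not> m \<subset> M''" using m(2) by blast
    qed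
    then have neQ: "Q \<noteq> {}" by auto
    have disj: "A \<inter> B = {}" if "A \<in> Q" "B \<in> Q" "A \<noteq> B" for A B
    proof -
      have "is_module V col B" using el[OF that(2)] unfolding strong_module_def by blast
      then have "A \<subseteq> B \<or> B \<subseteq> A \<or> A \<inter> B = {}"
        using el[OF that(1)] unfolding strong_module_def by blast
      moreover have "\<not> A \<subset> B" using el0[OF that(1)] el[OF that(2)] by blast
      moreover have "\<not> B \<subset> A" using el0[OF that(2)] el[OF that(1)] by blast
      ultimately show ?thesis using that(3) by blast
    qed
    show ?thesis using finQ neQ el disj by blast
  qed
  have pQ: "finite Q" "Q \<noteq> {}" "\<And>A. A \<in> Q \<Longrightarrow> A \<noteq> {}" "\<And>A. A \<in> Q \<Longrightarrow> A \<subseteq> V"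
    "\<And>A B. A \<in> Q \<Longrightarrow> B \<in> Q \<Longrightarrow> A \<noteq> B \<Longrightarrow> A \<inter> B = {}"
    using props by auto
  have rin: "r A \<in> A" if "A \<in> Q" for A
  proof -
    have "A \<noteq> {}" using pQ(3) that .
    then obtain a where "a \<in> A" by blast
    then show ?thesis unfolding r_def by (rule someI)
  qed
  have inj: "inj_on r Q"
  proof (rule inj_onI)
    fix A B assume AB: "A \<in> Q" "B \<in> Q" "r A = r B"
    then have "r A \<in> A \<inter> B" using rin[of A] rin[of B] by simp
    then show "A = B" using pQ(5)[OF AB(1,2)] by blast
  qed
  have rV: "r ` Q \<subseteq> V"
  proof
    fix x assume "x \<in> r ` Q"
    then obtain A where "A \<in> Q" "x = r A" by blast
    then show "x \<in> V" using rin pQ(4) by blast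
  qed
  from hered[OF assms(1) pQ(1,2) inj rV]
  show ?thesis unfolding qc Q_def .
qed

end
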